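(* Let $k\ge 2$ and $\ell\ge 2$ be integers. Then $\overline{\alpha}(\{1,k,2k,\dots,\ell k\})=\frac{1}{\ell+1}$.
   Context: For a finite set $S$ of positive integers, the distance graph $G(S)$ has vertex set $\mathbb{Z}$, with $i,j$ adjacent iff $|i-j|\in S$. The density of $A\subseteq\mathbb{Z}$ is $\delta(A)=\limsup_{N\to\infty}\frac{|A\cap[-N,N]|}{2N+1}$, and the independence ratio $\overline{\alpha}(S)$ is the supremum of $\delta(A)$ over independent sets $A$ of $G(S)$. *)

theory Defs
  imports "HOL-Analysis.Analysis"
begin

definition dist_adj :: "nat set \<Rightarrow> int \<Rightarrow> int \<Rightarrow> bool" where
  "dist_adj S i j \<longleftrightarrow> nat \<bar>i - j\<bar> \<in> S \<and> i \<noteq> j"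

definition indep_dist :: "nat set \<Rightarrow> int set \<Rightarrow> bool" where
  "indep_dist S A \<longleftrightarrow> (\<forall>i\<in>A. \<forall>j\<in>A. \<not> dist_adj S i j)"

definition upper_density :: "int set \<Rightarrow> ereal" where
  "upper_density A = limsup (\<lambda>N::nat. ereal (real (card (A \<inter> {- int N .. int N})) / real (2 * N + 1)))"

definition indep_ratio :: "nat set \<Rightarrow> ereal" where
  "indep_ratio S = (SUP A \<in> {A. indep_dist S A}. upper_density A)"

end

theory Submission
  imports Defs
begin


lemma block_le:
  fixes k l :: nat and A :: "int set" and a :: int
  assumes k: "k \<ge> 1" and ind: "indep_dist ({1} \<union> {m * k | m. 1 \<le> m \<and> m \<le> l}) A"
  shows "card (A \<inter> {a..<a + int k * (int l + 1)}) \<le> k"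
proof -
  let ?B = "A \<inter> {a..<a + int k * (int l + 1)}"
  have inj: "inj_on (\<lambda>x. (x - a) mod int k) ?B"
  proof (rule inj_onI)
    fix x y assume x: "x \<in> ?B" and y: "y \<in> ?B" and e: "(x - a) mod int k = (y - a) mod int k"
    show "x = y"
    proof (rule ccontr)
      assume ne: "x \<noteq> y"
      from e have "int k dvd ((x - a) - (y - a))" by (simp add: mod_eq_dvd_iff)
      then obtain j where j: "x - y = int k * j" by (auto simp: dvd_def)
      have j0: "j \<noteq> 0" using ne j by auto
      have "\<bar>x - y\<bar> < int k * (int l + 1)" using x y by auto
      hence "int k * \<bar>j\<bar> < int k * (int l + 1)" using j k by (simp add: abs_mult)
      hence jl: "\<bar>j\<bar> \<le> int l" using k by (simp add: mult_less_cancel_left)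
      have e2: "nat \<bar>x - y\<bar> = nat \<bar>j\<bar> * k" using j k by (simp add: abs_mult nat_mult_distrib mult.commute)
      have "nat \<bar>x - y\<bar> \<in> {m * k | m. 1 \<le> m \<and> m \<le> l}"
        unfolding e2 using j0 jl by force
      hence "dist_adj ({1} \<union> {m * k | m. 1 \<le> m \<and> m \<le> l}) x y"
        using ne unfolding dist_adj_def by blast
      thus False using ind x y unfolding indep_dist_def by blast
    qed
  qed
  have sub: "(\<lambda>x. (x - a) mod int k) ` ?B \<subseteq> {0..<int k}" using k by auto
  have "card ?B \<le> card {0..<int k}"
    by (rule card_inj_on_le[OF inj sub]) simp
  thus ?thesis by simp
qed



lemma blocks_le:
  fixes A :: "int set" and p :: int
  assumes h: "\<And>a. card (A \<inter> {a..<a+p}) \<le> k" and p: "p \<ge> 0"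
  shows "card (A \<inter> {a..<a + int m * p}) \<le> m * k"
proof (induction m arbitrary: a)
  case 0 thus ?case by simp
next
  case (Suc m)
  have "A \<inter> {a..<a + int (Suc m) * p} = (A \<inter> {a..<a+p}) \<union> (A \<inter> {a+p..<(a+p) + int m * p})"
    using p mult_nonneg_nonneg[OF p, of "int m"] apply (auto simp: algebra_simps)
    using mult_nonneg_nonneg[OF p, of "int m"] apply linarith+ done
  hence "card (A \<inter> {a..<a + int (Suc m) * p}) \<le> card (A \<inter> {a..<a+p}) + card (A \<inter> {a+p..<(a+p) + int m * p})"
    by (simp add: card_Un_le)
  also have "\<dots> \<le> k + m * k" using h Suc.IH[of "a+p"] by (intro add_mono) auto
  finally show ?case by simp
qed

lemma blocks_ge:
  fixes A :: "int set" and p :: int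
  assumes h: "\<And>a. card (A \<inter> {a..<a+p}) \<ge> k" and p: "p \<ge> 0"
  shows "card (A \<inter> {a..<a + int m * p}) \<ge> m * k"
proof (induction m arbitrary: a)
  case 0 thus ?case by simp
next
  case (Suc m)
  have "A \<inter> {a..<a + int (Suc m) * p} = (A \<inter> {a..<a+p}) \<union> (A \<inter> {a+p..<(a+p) + int m * p})"
    using p mult_nonneg_nonneg[OF p, of "int m"] apply (auto simp: algebra_simps)
    using mult_nonneg_nonneg[OF p, of "int m"] apply linarith+ done
  hence "card (A \<inter> {a..<a + int (Suc m) * p}) = card (A \<inter> {a..<a+p}) + card (A \<inter> {a+p..<(a+p) + int m * p})"
    by (simp add: card_Un_disjoint disjoint_iff)
  also have "\<dots> \<ge> k + m * k" using h Suc.IH[of "a+p"] by (intro add_mono) auto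
  finally show ?case by simp
qed

definition Aset :: "int \<Rightarrow> int \<Rightarrow> int set" where
  "Aset K L = {x. (x div K) mod (L+1) = (x mod K) mod 2}"

lemma Aset_block_ge:
  fixes K L a :: int
  assumes K: "K \<ge> 1" and L: "L \<ge> 2"
  shows "card (Aset K L \<inter> {a..<a + K * (L + 1)}) \<ge> nat K"
proof -
  define g where "g r = (let y = a + r in y + ((y mod K mod 2 - y div K) mod (L+1)) * K)" for r
  have gin: "g r \<in> Aset K L \<inter> {a..<a + K * (L + 1)}" if r: "r \<in> {0..<K}" for r
  proof -
    define y where "y = a + r"
    define j where "j = (y mod K mod 2 - y div K) mod (L+1)"
    have g: "g r = y + j * K" unfolding g_def y_def j_def Let_def by simp
    have j0: "0 \<le> j" and jL: "j \<le> L" using L pos_mod_bound[of "L+1"] unfolding j_def by fastforce+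
    have "(g r) div K = y div K + j" "(g r) mod K = y mod K" using K unfolding g by simp_all
    moreover have "(y div K + j) mod (L+1) = (y mod K mod 2) mod (L+1)"
      unfolding j_def by (simp add: mod_add_right_eq)
    moreover have "(y mod K mod 2) mod (L+1) = y mod K mod 2"
      using L by (intro mod_pos_pos_trivial) auto
    ultimately have "g r \<in> Aset K L" unfolding Aset_def by simp
    moreover have "a \<le> g r" using g j0 K r y_def by simp
    moreover have "g r < a + K * (L+1)"
    proof -
      have "K * j \<le> K * L" using jL K by (simp add: mult_left_mono)
      moreover have "K*(L+1) = K*L + K" by (simp add: distrib_left)
      moreover have "g r = a + r + K*j" using g y_def by (simp add: algebra_simps)
      moreover have "r < K" using r by simp
      ultimately show ?thesis by linarith
    qed
    ultimately show ?thesis by simp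
  qed
  have inj: "inj_on g {0..<K}"
  proof (rule inj_onI)
    fix r s assume r: "r \<in> {0..<K}" and s: "s \<in> {0..<K}" and e: "g r = g s"
    have h: "\<And>r. r \<in> {0..<K} \<Longrightarrow> (g r - a) mod K = r"
      unfolding g_def Let_def by simp
    have "r = (g r - a) mod K" using h[OF r] by (rule sym)
    also have "\<dots> = (g s - a) mod K" by (simp only: e)
    also have "\<dots> = s" by (rule h[OF s])
    finally show "r = s" .
  qed
  have "card {0..<K} \<le> card (Aset K L \<inter> {a..<a + K * (L + 1)})"
    by (rule card_inj_on_le[OF inj]) (use gin in auto)
  thus ?thesis by simp
qed

lemma Aset_indep:
  fixes k l :: nat
  assumes k: "k \<ge> 2" and l: "l \<ge> 2"
  shows "indep_dist ({1} \<union> {m * k | m. 1 \<le> m \<and> m \<le> l}) (Aset (int k) (int l))"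
proof -
  define K where "K = int k"
  define L where "L = int l"
  have K: "K \<ge> 2" and L: "L \<ge> 2" using k l unfolding K_def L_def by auto
  have one: False if x: "x \<in> Aset K L" and y: "x + 1 \<in> Aset K L" for x
  proof -
    define q where "q = x div K"
    define r where "r = x mod K"
    have r0: "0 \<le> r" and rK: "r < K" using K unfolding r_def by auto
    have dm: "K * q + r = x" unfolding q_def r_def by simp
    have dm1: "K * ((x+1) div K) + (x+1) mod K = x + 1" by simp
    show False
    proof (cases "r = K - 1")
      case True
      have "x + 1 = K * (q + 1)" using True dm by (simp add: algebra_simps)
      hence m1: "(x+1) mod K = 0" by simp
      hence "K * ((x+1) div K) = K * (q + 1)" using dm dm1 True by (simp add: algebra_simps)
      hence d1: "(x+1) div K = q + 1" using K by simp
      have c: "q mod (L+1) = r mod 2" using x unfolding Aset_def q_def r_def by simp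
      have c1: "(q+1) mod (L+1) = 0" using y m1 d1 unfolding Aset_def by simp
      have "(q+1) mod (L+1) = (q mod (L+1) + 1) mod (L+1)" by (simp add: mod_add_left_eq)
      also have "\<dots> = q mod (L+1) + 1" using c L by (intro mod_pos_pos_trivial) auto
      finally show False using c1 c by simp
    next
      case False
      hence r1: "r + 1 < K" using rK by simp
      have "(x+1) mod K = (r + 1) mod K" unfolding r_def by (simp add: mod_add_left_eq)
      also have "\<dots> = r + 1" using r0 r1 by (intro mod_pos_pos_trivial) auto
      finally have m1: "(x+1) mod K = r + 1" .
      hence "K * ((x+1) div K) = K * q" using dm dm1 by linarith
      hence d1: "(x+1) div K = q" using K by simp
      have c: "q mod (L+1) = r mod 2" using x unfolding Aset_def q_def r_def by simp
      have c1: "q mod (L+1) = (r+1) mod 2" using y m1 d1 unfolding Aset_def by simp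
      have "r mod 2 = (r+1) mod 2" using c c1 by simp
      thus False by presburger
    qed
  qed
  have mult: False if x: "x \<in> Aset K L" and y: "x + m * K \<in> Aset K L" and m: "1 \<le> m" "m \<le> L" for x m
  proof -
    have "(x + m*K) mod K = x mod K" "(x + m*K) div K = x div K + m" using K by simp_all
    hence "(x div K + m) mod (L+1) = (x div K) mod (L+1)" using x y unfolding Aset_def by simp
    hence "(L+1) dvd ((x div K + m) - x div K)" by (simp add: mod_eq_dvd_iff)
    hence "(L+1) dvd m" by simp
    thus False using m zdvd_not_zless[of m "L+1"] by simp
  qed
  show ?thesis unfolding indep_dist_def dist_adj_def
  proof (intro ballI notI)
    fix x y assume x: "x \<in> Aset (int k) (int l)" and y: "y \<in> Aset (int k) (int l)"
      and h: "nat \<bar>x - y\<bar> \<in> {1} \<union> {m * k |m. 1 \<le> m \<and> m \<le> l} \<and> x \<noteq> y"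
    have x': "x \<in> Aset K L" and y': "y \<in> Aset K L" using x y K_def L_def by auto
    from h consider "nat \<bar>x - y\<bar> = 1" | m where "nat \<bar>x - y\<bar> = m * k" "1 \<le> m" "m \<le> l" by blast
    thus False
    proof cases
      case 1
      hence "y = x + 1 \<or> x = y + 1" by linarith
      thus False using one x' y' by blast
    next
      case 2
      hence "\<bar>x - y\<bar> = int m * K" unfolding K_def by (simp add: nat_eq_iff)
      hence "y = x + int m * K \<or> x = y + int m * K" by linarith
      moreover have "1 \<le> int m" "int m \<le> L" using 2 L_def by auto
      ultimately show False using mult x' y' by blast
    qed
  qed
qed



lemma lim0: "(\<lambda>N::nat. real k / real (2 * N + 1)) \<longlonglongrightarrow> 0"
proof (rule tendsto_sandwich[of "\<lambda>_. 0" _ _ "\<lambda>N. real k / real (Suc N)"])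
  show "\<forall>\<^sub>F N in sequentially. (0::real) \<le> real k / real (2 * N + 1)" 
    by (intro always_eventually allI) simp
  have "real k / real (2 * N + 1) \<le> real k / real (Suc N)" for N
    by (rule divide_left_mono) simp_all
  thus "\<forall>\<^sub>F N in sequentially. real k / real (2 * N + 1) \<le> real k / real (Suc N)"
    by (intro always_eventually allI) 
  show "(\<lambda>N. 0::real) \<longlonglongrightarrow> 0" by (rule tendsto_const)
  show "(\<lambda>N. real k / real (Suc N)) \<longlonglongrightarrow> 0" using LIMSEQ_Suc[OF lim_const_over_n[of "real k"]] by simp
qed

lemma lim_aux: "(\<lambda>N::nat. c + real k / real (2 * N + 1)) \<longlonglongrightarrow> c"
proof -
  have "(\<lambda>N::nat. real k / real (2 * N + 1)) \<longlonglongrightarrow> 0" by (rule lim0)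
  thus ?thesis using tendsto_add[OF tendsto_const, of _ 0 sequentially c] by simp
qed

lemma lim_aux2: "(\<lambda>N::nat. c - real k / real (2 * N + 1)) \<longlonglongrightarrow> c"
proof -
  have "(\<lambda>N::nat. real k / real (2 * N + 1)) \<longlonglongrightarrow> 0" by (rule lim0)
  thus ?thesis using tendsto_diff[OF tendsto_const, of _ 0 sequentially c] by simp
qed

lemma density_le:
  fixes A :: "int set" and k l :: nat
  assumes k: "k \<ge> 1" and block: "\<And>a. card (A \<inter> {a..<a + int k * (int l + 1)}) \<le> k"
  shows "upper_density A \<le> ereal (1 / (real l + 1))"
proof -
  define p where "p = k * (l + 1)"
  have p0: "p > 0" using k unfolding p_def by simp
  have bound: "real (card (A \<inter> {- int N .. int N})) / real (2 * N + 1) \<le> 1 / (real l + 1) + real k / real (2 * N + 1)" for N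
  proof -
    define n where "n = 2 * N + 1"
    define m where "m = n div p + 1"
    have "n < m * p" unfolding m_def using p0
      by (metis add.commute div_mult_mod_eq mod_less_divisor add_less_cancel_left distrib_right mult_1)
    hence "int n < int (m * p)" by linarith
    hence "2 * int N + 1 < int m * (int k * (int l + 1))" unfolding n_def p_def by (simp add: algebra_simps)
    hence sub: "{- int N .. int N} \<subseteq> {- int N ..< - int N + int m * (int k * (int l + 1))}"
      by auto
    have "card (A \<inter> {- int N .. int N}) \<le> card (A \<inter> {- int N ..< - int N + int m * (int k * (int l + 1))})"
      using sub by (intro card_mono) auto
    also have "\<dots> \<le> m * k" by (rule blocks_le) (use block in auto)
    finally have c: "real (card (A \<inter> {- int N .. int N})) \<le> real m * real k" by (simp flip: of_nat_mult)
    have "(n div p) * p \<le> n" by simp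
    hence "real (n div p) * real p \<le> real n" by (simp flip: of_nat_mult)
    hence "real (n div p) \<le> real n / real p" using p0 by (simp add: field_simps)
    hence "real m * real k \<le> (real n / real p + 1) * real k" unfolding m_def by (simp add: mult_right_mono)
    also have "\<dots> = real n * (1 / (real l + 1)) + real k"
    proof -
      have rp: "real p = real k * (real l + 1)" unfolding p_def by (simp add: algebra_simps)
      have "real k \<noteq> 0" "real l + 1 \<noteq> 0" using k by auto
      thus ?thesis unfolding rp by (simp add: distrib_right left_diff_distrib)
    qed
    finally have "real (card (A \<inter> {- int N .. int N})) \<le> real n * (1 / (real l + 1)) + real k" using c by linarith
    hence "real (card (A \<inter> {- int N .. int N})) / real n \<le> (real n * (1 / (real l + 1)) + real k) / real n"
      by (rule divide_right_mono) simp
    also have "\<dots> = 1 / (real l + 1) + real k / real n" proof -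
      have "real n \<noteq> 0" unfolding n_def by simp
      thus ?thesis by (simp add: add_divide_distrib)
    qed
    finally show ?thesis unfolding n_def .
  qed
  have "upper_density A \<le> limsup (\<lambda>N. ereal (1 / (real l + 1) + real k / real (2 * N + 1)))"
    unfolding upper_density_def by (rule Limsup_mono) (use bound in auto)
  also have "\<dots> = ereal (1 / (real l + 1))"
  proof -
    have L: "(\<lambda>N. ereal (1 / (real l + 1) + real k / real (2 * N + 1))) \<longlonglongrightarrow> ereal (1 / (real l + 1))"
      by (simp only: lim_ereal lim_aux)
    show ?thesis by (rule lim_imp_Limsup[OF _ L]) simp
  qed
  finally show ?thesis .
qed

lemma density_ge:
  fixes A :: "int set" and k l :: nat
  assumes k: "k \<ge> 1" and block: "\<And>a. card (A \<inter> {a..<a + int k * (int l + 1)}) \<ge> k"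
  shows "upper_density A \<ge> ereal (1 / (real l + 1))"
proof -
  define p where "p = k * (l + 1)"
  have p0: "p > 0" using k unfolding p_def by simp
  have bound: "real (card (A \<inter> {- int N .. int N})) / real (2 * N + 1) \<ge> 1 / (real l + 1) - real k / real (2 * N + 1)" for N
  proof -
    define n where "n = 2 * N + 1"
    define m where "m = n div p"
    have "m * p \<le> n" unfolding m_def by simp
    hence "int (m * p) \<le> int n" by linarith
    hence "int m * (int k * (int l + 1)) \<le> 2 * int N + 1" unfolding n_def p_def by (simp add: algebra_simps)
    hence sub: "{- int N ..< - int N + int m * (int k * (int l + 1))} \<subseteq> {- int N .. int N}"
      by auto
    have "m * k \<le> card (A \<inter> {- int N ..< - int N + int m * (int k * (int l + 1))})"
      by (rule blocks_ge) (use block in auto)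
    also have "\<dots> \<le> card (A \<inter> {- int N .. int N})"
      using sub by (intro card_mono) auto
    finally have c: "real m * real k \<le> real (card (A \<inter> {- int N .. int N}))" by (simp flip: of_nat_mult)
    have "n < (n div p + 1) * p" using p0
      by (metis add.commute div_mult_mod_eq mod_less_divisor add_less_cancel_left distrib_right mult_1)
    hence "n < (m + 1) * p" unfolding m_def .
    hence "real n < real ((m + 1) * p)" by (simp only: of_nat_less_iff)
    moreover have "real ((m + 1) * p) = (real m + 1) * real p" by (simp only: of_nat_mult of_nat_add of_nat_1)
    ultimately have "real n \<le> (real m + 1) * real p" by linarith
    hence "real n / real p - 1 \<le> real m" using p0 by (simp add: field_simps)
    hence "(real n / real p - 1) * real k \<le> real m * real k" by (simp add: mult_right_mono)
    moreover have "(real n / real p - 1) * real k = real n * (1 / (real l + 1)) - real k"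
    proof -
      have rp: "real p = real k * (real l + 1)" unfolding p_def by (simp add: algebra_simps)
      have "real k \<noteq> 0" "real l + 1 \<noteq> 0" using k by auto
      thus ?thesis unfolding rp by (simp add: distrib_right left_diff_distrib)
    qed
    ultimately have "real n * (1 / (real l + 1)) - real k \<le> real (card (A \<inter> {- int N .. int N}))" using c by linarith
    hence "(real n * (1 / (real l + 1)) - real k) / real n \<le> real (card (A \<inter> {- int N .. int N})) / real n"
      by (rule divide_right_mono) simp
    moreover have "(real n * (1 / (real l + 1)) - real k) / real n = 1 / (real l + 1) - real k / real n" proof -
      have "real n \<noteq> 0" unfolding n_def by simp
      thus ?thesis by (simp add: diff_divide_distrib)
    qed
    ultimately show ?thesis unfolding n_def by simp
  qed
  have "ereal (1 / (real l + 1)) = limsup (\<lambda>N. ereal (1 / (real l + 1) - real k / real (2 * N + 1)))"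
  proof -
    have L: "(\<lambda>N. ereal (1 / (real l + 1) - real k / real (2 * N + 1))) \<longlonglongrightarrow> ereal (1 / (real l + 1))"
      by (simp only: lim_ereal lim_aux2)
    show ?thesis by (rule lim_imp_Limsup[OF _ L, symmetric]) simp
  qed
  also have "\<dots> \<le> upper_density A"
    unfolding upper_density_def by (rule Limsup_mono) (use bound in auto)
  finally show ?thesis .
qed


lemma ratio_upper:
  fixes k l :: nat
  assumes "k \<ge> 2" and "l \<ge> 2"
  shows "indep_ratio ({1} \<union> {m * k | m. 1 \<le> m \<and> m \<le> l}) \<le> ereal (1 / (real l + 1))"
  unfolding indep_ratio_def
proof (rule SUP_least)
  fix A assume "A \<in> {A. indep_dist ({1} \<union> {m * k | m. 1 \<le> m \<and> m \<le> l}) A}"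
  hence ind: "indep_dist ({1} \<union> {m * k | m. 1 \<le> m \<and> m \<le> l}) A" by simp
  show "upper_density A \<le> ereal (1 / (real l + 1))"
    by (rule density_le[of k]) (use assms block_le[OF _ ind] in auto)
qed

lemma ratio_lower:
  fixes k l :: nat
  assumes "k \<ge> 2" and "l \<ge> 2"
  shows "ereal (1 / (real l + 1)) \<le> indep_ratio ({1} \<union> {m * k | m. 1 \<le> m \<and> m \<le> l})"
proof -
  have ind: "indep_dist ({1} \<union> {m * k | m. 1 \<le> m \<and> m \<le> l}) (Aset (int k) (int l))"
    using Aset_indep assms by blast
  have blk: "card (Aset (int k) (int l) \<inter> {a..<a + int k * (int l + 1)}) \<ge> k" for a
    using Aset_block_ge[of "int k" "int l" a] assms by simp
  have mem: "Aset (int k) (int l) \<in> {A. indep_dist ({1} \<union> {m * k | m. 1 \<le> m \<and> m \<le> l}) A}"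
    using ind by simp
  have dens: "ereal (1 / (real l + 1)) \<le> upper_density (Aset (int k) (int l))"
    by (rule density_ge[of k]) (use assms blk in auto)
  show ?thesis
    unfolding indep_ratio_def by (rule order_trans[OF dens SUP_upper[where f=upper_density, OF mem]])
qed

theorem corollary20:
  fixes k l :: nat
  assumes "k \<ge> 2" and "l \<ge> 2"
  shows "indep_ratio ({1} \<union> {m * k | m. 1 \<le> m \<and> m \<le> l}) = ereal (1 / (real l + 1))"
  by (rule antisym[OF ratio_upper[OF assms] ratio_lower[OF assms]])

end
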